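(* Let $S,T$ be ordered trees, let $f\colon T\to S$ be a rigid surjection with injection $i$, and let $v\in S$. Then the domain of $f^v$ is $T^{i(v)}$, the image of $T^{i(v)}$ under $f^v$ is $S^v$, and $f^v\colon T^{i(v)}\to S^v$ is a sealed rigid surjection.
   Context: A tree is a finite, non-empty partially ordered set $(T,\sqsubseteq_T)$ with a smallest element (the root) such that the set of predecessors of each element is linearly ordered; each node counts as its own predecessor and successor. $v\wedge_T w$ is the $\sqsubseteq_T$-largest common predecessor of $v,w$. A tree is ordered if the immediate successors of each node carry a fixed linear order; this induces the lexicographic linear order $\leq_T$: $v\leq_T w$ if $v\sqsubseteq_T w$, and for incomparable $v,w$, $v\leq_T w$ iff the immediate successor of $v\wedge_T w$ below $v$ precedes the one below $w$. A morphism $e\colon S\to T$ satisfies $e(v\wedge_S w)=e(v)\wedge_T e(w)$, is monotone from $\leq_S$ to $\leq_T$, and maps root to root. A function $f\colon T\to S$ is a rigid surjection if there is a morphism $e\colon S\to T$ with $f\circ e={\rm id}_S$ and $e(f(w))\sqsubseteq_T w$ for all $w$; this $e$ is unique and called the injection of $f$. For $v\in S$, $S^v=\{w\in S\mid w\leq_S v\}$ (an ordered tree with inherited orders). For a rigid surjection $f\colon T\to S$ with injection $i$ and $v\in S$, $f^v=f\upharpoonright T^{i(v)}$. A rigid surjection $f\colon T\to S$ is sealed if its injection maps the $\leq_S$-largest leaf of $S$ to the $\leq_T$-largest leaf of $T$ (a leaf is a $\sqsubseteq$-maximal node). *)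

theory Defs
  imports "HOL-Library.FuncSet"
begin

text \<open>An ordered tree is given by a carrier set T, the tree order P (written \<sqsubseteq>)
 and a sibling order L, which on the set of immediate successors of each node
 is a (non-strict) linear order. Values of L outside such sibling sets are irrelevant.\<close>

definition tree :: "'a set \<Rightarrow> ('a \<Rightarrow> 'a \<Rightarrow> bool) \<Rightarrow> bool" where
  "tree T P \<longleftrightarrow> finite T \<and> T \<noteq> {}
     \<and> (\<forall>x\<in>T. P x x)
     \<and> (\<forall>x\<in>T. \<forall>y\<in>T. P x y \<and> P y x \<longrightarrow> x = y)
     \<and> (\<forall>x\<in>T. \<forall>y\<in>T. \<forall>z\<in>T. P x y \<and> P y z \<longrightarrow> P x z)
     \<and> (\<exists>r\<in>T. \<forall>x\<in>T. P r x)
     \<and> (\<forall>w\<in>T. \<forall>u\<in>T. \<forall>v\<in>T. P u w \<and> P v w \<longrightarrow> P u v \<or> P v u)"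

definition isucc :: "'a set \<Rightarrow> ('a \<Rightarrow> 'a \<Rightarrow> bool) \<Rightarrow> 'a \<Rightarrow> 'a \<Rightarrow> bool" where
  "isucc T P v w \<longleftrightarrow> v \<in> T \<and> w \<in> T \<and> P v w \<and> v \<noteq> w
     \<and> (\<forall>u\<in>T. P v u \<and> P u w \<longrightarrow> u = v \<or> u = w)"

definition ordered_tree :: "'a set \<Rightarrow> ('a \<Rightarrow> 'a \<Rightarrow> bool) \<Rightarrow> ('a \<Rightarrow> 'a \<Rightarrow> bool) \<Rightarrow> bool" where
  "ordered_tree T P L \<longleftrightarrow> tree T P \<and>
     (\<forall>v\<in>T. let C = {w. isucc T P v w} in
        (\<forall>x\<in>C. L x x)
      \<and> (\<forall>x\<in>C. \<forall>y\<in>C. L x y \<and> L y x \<longrightarrow> x = y)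
      \<and> (\<forall>x\<in>C. \<forall>y\<in>C. \<forall>z\<in>C. L x y \<and> L y z \<longrightarrow> L x z)
      \<and> (\<forall>x\<in>C. \<forall>y\<in>C. L x y \<or> L y x))"

definition troot :: "'a set \<Rightarrow> ('a \<Rightarrow> 'a \<Rightarrow> bool) \<Rightarrow> 'a" where
  "troot T P = (THE r. r \<in> T \<and> (\<forall>x\<in>T. P r x))"

definition tmeet :: "'a set \<Rightarrow> ('a \<Rightarrow> 'a \<Rightarrow> bool) \<Rightarrow> 'a \<Rightarrow> 'a \<Rightarrow> 'a" where
  "tmeet T P v w = (THE u. u \<in> T \<and> P u v \<and> P u w \<and> (\<forall>u'\<in>T. P u' v \<and> P u' w \<longrightarrow> P u' u))"

definition child_toward :: "'a set \<Rightarrow> ('a \<Rightarrow> 'a \<Rightarrow> bool) \<Rightarrow> 'a \<Rightarrow> 'a \<Rightarrow> 'a" where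
  "child_toward T P m v = (THE c. isucc T P m c \<and> P c v)"

definition lex :: "'a set \<Rightarrow> ('a \<Rightarrow> 'a \<Rightarrow> bool) \<Rightarrow> ('a \<Rightarrow> 'a \<Rightarrow> bool) \<Rightarrow> 'a \<Rightarrow> 'a \<Rightarrow> bool" where
  "lex T P L v w \<longleftrightarrow> v \<in> T \<and> w \<in> T \<and>
     (P v w \<or> (\<not> P v w \<and> \<not> P w v \<and>
        L (child_toward T P (tmeet T P v w) v) (child_toward T P (tmeet T P v w) w)))"

definition morphism ::
  "'b set \<Rightarrow> ('b \<Rightarrow> 'b \<Rightarrow> bool) \<Rightarrow> ('b \<Rightarrow> 'b \<Rightarrow> bool) \<Rightarrow>
   'a set \<Rightarrow> ('a \<Rightarrow> 'a \<Rightarrow> bool) \<Rightarrow> ('a \<Rightarrow> 'a \<Rightarrow> bool) \<Rightarrow> ('b \<Rightarrow> 'a) \<Rightarrow> bool" where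
  "morphism S PS LS T PT LT e \<longleftrightarrow>
     (\<forall>x\<in>S. e x \<in> T)
   \<and> (\<forall>v\<in>S. \<forall>w\<in>S. e (tmeet S PS v w) = tmeet T PT (e v) (e w))
   \<and> (\<forall>v\<in>S. \<forall>w\<in>S. lex S PS LS v w \<longrightarrow> lex T PT LT (e v) (e w))
   \<and> e (troot S PS) = troot T PT"

definition is_injection ::
  "'a set \<Rightarrow> ('a \<Rightarrow> 'a \<Rightarrow> bool) \<Rightarrow> ('a \<Rightarrow> 'a \<Rightarrow> bool) \<Rightarrow>
   'b set \<Rightarrow> ('b \<Rightarrow> 'b \<Rightarrow> bool) \<Rightarrow> ('b \<Rightarrow> 'b \<Rightarrow> bool) \<Rightarrow> ('a \<Rightarrow> 'b) \<Rightarrow> ('b \<Rightarrow> 'a) \<Rightarrow> bool" where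
  "is_injection T PT LT S PS LS f e \<longleftrightarrow>
     (\<forall>w\<in>T. f w \<in> S)
   \<and> morphism S PS LS T PT LT e
   \<and> (\<forall>s\<in>S. f (e s) = s)
   \<and> (\<forall>w\<in>T. PT (e (f w)) w)"

definition rigid_surj ::
  "'a set \<Rightarrow> ('a \<Rightarrow> 'a \<Rightarrow> bool) \<Rightarrow> ('a \<Rightarrow> 'a \<Rightarrow> bool) \<Rightarrow>
   'b set \<Rightarrow> ('b \<Rightarrow> 'b \<Rightarrow> bool) \<Rightarrow> ('b \<Rightarrow> 'b \<Rightarrow> bool) \<Rightarrow> ('a \<Rightarrow> 'b) \<Rightarrow> bool" where
  "rigid_surj T PT LT S PS LS f \<longleftrightarrow> (\<exists>e. is_injection T PT LT S PS LS f e)"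

definition leaf :: "'a set \<Rightarrow> ('a \<Rightarrow> 'a \<Rightarrow> bool) \<Rightarrow> 'a \<Rightarrow> bool" where
  "leaf T P x \<longleftrightarrow> x \<in> T \<and> (\<forall>y\<in>T. P x y \<longrightarrow> y = x)"

definition largest_leaf :: "'a set \<Rightarrow> ('a \<Rightarrow> 'a \<Rightarrow> bool) \<Rightarrow> ('a \<Rightarrow> 'a \<Rightarrow> bool) \<Rightarrow> 'a \<Rightarrow> bool" where
  "largest_leaf T P L x \<longleftrightarrow> leaf T P x \<and> (\<forall>y. leaf T P y \<longrightarrow> lex T P L y x)"

definition sealed_rigid_surj ::
  "'a set \<Rightarrow> ('a \<Rightarrow> 'a \<Rightarrow> bool) \<Rightarrow> ('a \<Rightarrow> 'a \<Rightarrow> bool) \<Rightarrow>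
   'b set \<Rightarrow> ('b \<Rightarrow> 'b \<Rightarrow> bool) \<Rightarrow> ('b \<Rightarrow> 'b \<Rightarrow> bool) \<Rightarrow> ('a \<Rightarrow> 'b) \<Rightarrow> bool" where
  "sealed_rigid_surj T PT LT S PS LS f \<longleftrightarrow>
     (\<exists>e. is_injection T PT LT S PS LS f e \<and>
        (\<forall>lS lT. largest_leaf S PS LS lS \<longrightarrow> largest_leaf T PT LT lT \<longrightarrow> e lS = lT))"

text \<open>\<open>T^v = {w \<in> T. w \<le>_T v}\<close>, with inherited orders (same relations P, L).\<close>
definition lexdown :: "'a set \<Rightarrow> ('a \<Rightarrow> 'a \<Rightarrow> bool) \<Rightarrow> ('a \<Rightarrow> 'a \<Rightarrow> bool) \<Rightarrow> 'a \<Rightarrow> 'a set" where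
  "lexdown T P L v = {w \<in> T. lex T P L w v}"

end

theory Submission imports Defs begin

locale tr = fixes T :: "'a set" and P :: "'a \<Rightarrow> 'a \<Rightarrow> bool"
  assumes tr: "tree T P"
begin

lemma fin: "finite T" using tr unfolding tree_def by blast
lemma rfl: "x \<in> T \<Longrightarrow> P x x" using tr unfolding tree_def by blast
lemma asym: "x \<in> T \<Longrightarrow> y \<in> T \<Longrightarrow> P x y \<Longrightarrow> P y x \<Longrightarrow> x = y" using tr unfolding tree_def by blast
lemma trn: "x \<in> T \<Longrightarrow> y \<in> T \<Longrightarrow> z \<in> T \<Longrightarrow> P x y \<Longrightarrow> P y z \<Longrightarrow> P x z" using tr unfolding tree_def by blast
lemma root_ex: "\<exists>r\<in>T. \<forall>x\<in>T. P r x" using tr unfolding tree_def by blast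
lemma lin: "w \<in> T \<Longrightarrow> u \<in> T \<Longrightarrow> v \<in> T \<Longrightarrow> P u w \<Longrightarrow> P v w \<Longrightarrow> P u v \<or> P v u"
  using tr unfolding tree_def by blast

definition pr where "pr u = card {x\<in>T. P x u}"

lemma pr_less: assumes "u \<in> T" "c \<in> T" "P u c" "u \<noteq> c" shows "pr u < pr c"
proof -
  have "{x\<in>T. P x u} \<subset> {x\<in>T. P x c}"
    using assms trn[of _ u c] asym[of c u] rfl[of c] by blast
  thus ?thesis unfolding pr_def by (intro psubset_card_mono) (auto intro: finite_subset[OF _ fin])
qed

lemma ex_max: assumes "A \<subseteq> T" "A \<noteq> {}" shows "\<exists>x\<in>A. \<forall>y\<in>A. pr y \<le> pr x"
proof -
  have f: "finite A" using assms fin finite_subset by blast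
  let ?k = "Max (pr ` A)"
  have "?k \<in> pr ` A" using f assms by (intro Max_in) auto
  then obtain x where x: "x \<in> A" "pr x = ?k" by (rule imageE) auto
  have "\<forall>y\<in>A. pr y \<le> ?k" using f by (simp add: Max_ge)
  thus ?thesis using x by metis
qed

lemma ex_min: assumes "A \<subseteq> T" "A \<noteq> {}" shows "\<exists>x\<in>A. \<forall>y\<in>A. pr x \<le> pr y"
proof -
  have f: "finite A" using assms fin finite_subset by blast
  let ?k = "Min (pr ` A)"
  have "?k \<in> pr ` A" using f assms by (intro Min_in) auto
  then obtain x where x: "x \<in> A" "pr x = ?k" by (rule imageE) auto
  have "\<forall>y\<in>A. ?k \<le> pr y" using f by (simp add: Min_le)
  thus ?thesis using x by metis
qed

lemma meet_ex: assumes "a \<in> T" "b \<in> T"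
  shows "\<exists>m\<in>T. P m a \<and> P m b \<and> (\<forall>u\<in>T. P u a \<and> P u b \<longrightarrow> P u m)"
proof -
  let ?A = "{u\<in>T. P u a \<and> P u b}"
  obtain r where r: "r \<in> T" "\<forall>x\<in>T. P r x" using root_ex by blast
  have "?A \<noteq> {}" using r assms by blast
  then obtain m where m: "m \<in> ?A" "\<forall>y\<in>?A. pr y \<le> pr m" using ex_max[of ?A] by blast
  have "\<forall>u\<in>T. P u a \<and> P u b \<longrightarrow> P u m"
  proof (intro ballI impI)
    fix u assume u: "u \<in> T" "P u a \<and> P u b"
    have "P u m \<or> P m u" using lin[of a u m] u m assms by blast
    moreover have "\<not> (P m u \<and> m \<noteq> u)" using pr_less[of m u] m u by force
    ultimately show "P u m" using u rfl by blast
  qed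
  thus ?thesis using m by blast
qed

lemma tmeet_eq: assumes "m \<in> T" "P m a" "P m b" "\<forall>u\<in>T. P u a \<and> P u b \<longrightarrow> P u m"
  shows "tmeet T P a b = m"
  unfolding tmeet_def
  by (rule the_equality) (use assms asym in blast)+

lemma child_ex: assumes "m \<in> T" "a \<in> T" "P m a" "m \<noteq> a"
  shows "\<exists>c. isucc T P m c \<and> P c a"
proof -
  let ?B = "{u\<in>T. P m u \<and> P u a \<and> u \<noteq> m}"
  have "a \<in> ?B" using assms rfl[of a] by blast
  hence "?B \<noteq> {}" by blast
  then obtain c where c: "c \<in> ?B" "\<forall>y\<in>?B. pr c \<le> pr y" using ex_min[of ?B] by blast
  have cB: "c \<in> T" "P m c" "P c a" "c \<noteq> m" using c(1) by auto
  have "\<forall>u\<in>T. P m u \<and> P u c \<longrightarrow> u = m \<or> u = c"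
  proof (intro ballI impI)
    fix u assume u: "u \<in> T" "P m u \<and> P u c"
    show "u = m \<or> u = c"
    proof (rule ccontr)
      assume nu: "\<not> (u = m \<or> u = c)"
      have "P u a" using trn[of u c a] u cB assms by blast
      hence "u \<in> ?B" using u nu by blast
      hence "pr c \<le> pr u" using c(2) by blast
      moreover have "pr u < pr c" using pr_less[of u c] u cB nu by blast
      ultimately show False by simp
    qed
  qed
  hence "isucc T P m c" unfolding isucc_def using cB assms by blast
  thus ?thesis using c by blast
qed

lemma isucc_T: "isucc T P m c \<Longrightarrow> m \<in> T \<and> c \<in> T \<and> P m c \<and> m \<noteq> c"
  unfolding isucc_def by blast

lemma child_eq: assumes "isucc T P m c" "P c a" "a \<in> T"
  shows "child_toward T P m a = c"
  unfolding child_toward_def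
proof (rule the_equality)
  show "isucc T P m c \<and> P c a" using assms by blast
  fix c' assume c': "isucc T P m c' \<and> P c' a"
  have "P c c' \<or> P c' c" using lin[of a c c'] c' assms isucc_T by blast
  thus "c' = c" using c' assms unfolding isucc_def by metis
qed

end

locale otr = tr T P for T :: "'a set" and P and L :: "'a \<Rightarrow> 'a \<Rightarrow> bool" +
  assumes ot: "ordered_tree T P L"
begin

lemma L_antisym: "isucc T P m x \<Longrightarrow> isucc T P m y \<Longrightarrow> L x y \<Longrightarrow> L y x \<Longrightarrow> x = y"
  using ot isucc_T unfolding ordered_tree_def Let_def by (metis mem_Collect_eq)
lemma L_trans: "isucc T P m x \<Longrightarrow> isucc T P m y \<Longrightarrow> isucc T P m z \<Longrightarrow> L x y \<Longrightarrow> L y z \<Longrightarrow> L x z"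
  using ot isucc_T unfolding ordered_tree_def Let_def by (metis mem_Collect_eq)
lemma L_total: "isucc T P m x \<Longrightarrow> isucc T P m y \<Longrightarrow> L x y \<or> L y x"
  using ot isucc_T unfolding ordered_tree_def Let_def by (metis mem_Collect_eq)

lemma inc: assumes "a \<in> T" "b \<in> T" "\<not> P a b" "\<not> P b a"
  obtains m ca cb where "m \<in> T" "P m a" "P m b" "\<forall>u\<in>T. P u a \<and> P u b \<longrightarrow> P u m"
    "tmeet T P a b = m" "tmeet T P b a = m" "isucc T P m ca" "P ca a" "isucc T P m cb" "P cb b"
    "child_toward T P m a = ca" "child_toward T P m b = cb" "ca \<noteq> cb"
proof -
  obtain m where m: "m \<in> T" "P m a" "P m b" "\<forall>u\<in>T. P u a \<and> P u b \<longrightarrow> P u m"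
    using meet_ex assms by blast
  have e1: "tmeet T P a b = m" "tmeet T P b a = m" using tmeet_eq m by blast+
  have "m \<noteq> a" "m \<noteq> b" using m assms by auto
  then obtain ca cb where c: "isucc T P m ca" "P ca a" "isucc T P m cb" "P cb b"
    using child_ex m assms by metis
  have ch: "child_toward T P m a = ca" "child_toward T P m b = cb" using child_eq c assms by blast+
  have "ca \<noteq> cb"
  proof
    assume "ca = cb"
    hence "P ca m" using m c isucc_T by blast
    thus False using c isucc_T asym m by blast
  qed
  thus ?thesis using that m e1 c ch by blast
qed

abbreviation lx where "lx \<equiv> lex T P L"

lemma lex_T: "lx a b \<Longrightarrow> a \<in> T \<and> b \<in> T" unfolding lex_def by blast
lemma lex_P: "a \<in> T \<Longrightarrow> b \<in> T \<Longrightarrow> P a b \<Longrightarrow> lx a b" unfolding lex_def by blast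

lemma lex_antisym: assumes "lx a b" "lx b a" shows "a = b"
proof (cases "P a b \<or> P b a")
  case True
  thus ?thesis using assms asym unfolding lex_def by blast
next
  case False
  have ab: "a \<in> T" "b \<in> T" using assms lex_T by blast+
  obtain m ca cb where "tmeet T P a b = m" "tmeet T P b a = m" "isucc T P m ca" "isucc T P m cb"
    "child_toward T P m a = ca" "child_toward T P m b = cb" "ca \<noteq> cb"
    using inc[OF ab] False by metis
  thus ?thesis using assms False L_antisym unfolding lex_def by metis
qed

lemma lex_total: assumes "a \<in> T" "b \<in> T" shows "lx a b \<or> lx b a"
proof (cases "P a b \<or> P b a")
  case True
  thus ?thesis using assms unfolding lex_def by blast
next
  case False
  obtain m ca cb where "tmeet T P a b = m" "tmeet T P b a = m" "isucc T P m ca" "isucc T P m cb"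
    "child_toward T P m a = ca" "child_toward T P m b = cb"
    using inc[OF assms] False by metis
  thus ?thesis using assms False L_total unfolding lex_def by metis
qed

lemma lex_trans: assumes ab: "lx a b" and bc: "lx b c" shows "lx a c"
proof -
  have T: "a \<in> T" "b \<in> T" "c \<in> T" using ab bc lex_T by blast+
  show ?thesis
  proof (cases "P a c")
    case True thus ?thesis using lex_P T by blast
  next
    case nac: False
    show ?thesis
    proof (cases "P a b")
      case pab: True
      show ?thesis
      proof (cases "P b c")
        case True thus ?thesis using pab trn T nac by blast
      next
        case False
        hence ib: "\<not> P b c" "\<not> P c b" using bc unfolding lex_def by blast+
        obtain m cb cc where m: "m \<in> T" "P m b" "P m c" "\<forall>u\<in>T. P u b \<and> P u c \<longrightarrow> P u m"
          "tmeet T P b c = m" "isucc T P m cb" "P cb b" "isucc T P m cc" "P cc c"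
          "child_toward T P m b = cb" "child_toward T P m c = cc"
          using inc[of b c] T ib by metis
        have Lbc: "L cb cc" using bc ib m unfolding lex_def by metis
        have nca: "\<not> P c a" using pab ib trn T by blast
        have "P a m \<or> P m a" using lin[of b a m] T m pab by blast
        hence pma: "P m a" "m \<noteq> a" using nac trn[of a m c] T m by auto
        have mt: "tmeet T P a c = m"
          by (rule tmeet_eq) (use m pma T trn[of _ a b] pab in blast)+
        have "P cb a \<or> P a cb" using lin[of b cb a] m T pab isucc_T by blast
        hence "P cb a" using m pma unfolding isucc_def by (metis T(1) rfl)
        hence "child_toward T P m a = cb" using child_eq m T by blast
        thus ?thesis using mt m Lbc nac nca T unfolding lex_def by metis
      qed
    next
      case npab: False
      hence ia: "\<not> P a b" "\<not> P b a" using ab unfolding lex_def by blast+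
      obtain m ca cb where m: "m \<in> T" "P m a" "P m b" "\<forall>u\<in>T. P u a \<and> P u b \<longrightarrow> P u m"
          "tmeet T P a b = m" "isucc T P m ca" "P ca a" "isucc T P m cb" "P cb b"
          "child_toward T P m a = ca" "child_toward T P m b = cb" "ca \<noteq> cb"
          using inc[of a b] T ia by metis
      have Lab: "L ca cb" using ab ia m unfolding lex_def by metis
      show ?thesis
      proof (cases "P b c")
        case pbc: True
        have nca: "\<not> P c a" using pbc ia trn T by blast
        have mt: "tmeet T P a c = m"
        proof (rule tmeet_eq)
          show "\<forall>u\<in>T. P u a \<and> P u c \<longrightarrow> P u m"
          proof (intro ballI impI)
            fix u assume u: "u \<in> T" "P u a \<and> P u c"
            have "P u b \<or> P b u" using lin[of c u b] u T pbc by blast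
            thus "P u m" using u m ia trn[of b u a] T by blast
          qed
        qed (use m pbc trn T in blast)+
        have "child_toward T P m c = cb" using child_eq m T trn[of cb b c] pbc isucc_T by blast
        thus ?thesis using mt m Lab nac nca T unfolding lex_def by metis
      next
        case False
        hence ib: "\<not> P b c" "\<not> P c b" using bc unfolding lex_def by blast+
        obtain n db dc where n: "n \<in> T" "P n b" "P n c" "\<forall>u\<in>T. P u b \<and> P u c \<longrightarrow> P u n"
          "tmeet T P b c = n" "isucc T P n db" "P db b" "isucc T P n dc" "P dc c"
          "child_toward T P n b = db" "child_toward T P n c = dc" "db \<noteq> dc"
          using inc[of b c] T ib by metis
        have Lbc: "L db dc" using bc ib n unfolding lex_def by metis
        have mn: "P m n \<or> P n m" using lin[of b m n] m n T by blast
        show ?thesis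
        proof (cases "P c a")
          case pca: True
          have "P n m" using n m trn[of n c a] pca T by blast
          have "P m c \<or> P c m" using lin[of a m c] m T pca by blast
          hence "P m c" using m ib trn[of c m b] T by blast
          hence "m = n" using \<open>P n m\<close> n m asym by blast
          hence "ca = dc" "cb = db" using child_eq[of m dc a] child_eq[of m db b] n m T trn[of dc c a] pca isucc_T
            by metis+
          hence False using Lab Lbc L_antisym m by metis
          thus ?thesis ..
        next
          case nca: False
          show ?thesis
          proof (cases "m = n")
            case True
            hence "cb = db" using m(11) n(10) by simp
            hence Lac: "L ca dc" using L_trans[OF m(6) m(8), of dc] n(8) True Lab Lbc by simp
            have mt: "tmeet T P a c = m"
            proof (rule tmeet_eq)
              show "\<forall>u\<in>T. P u a \<and> P u c \<longrightarrow> P u m"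
              proof (intro ballI impI)
                fix u assume u: "u \<in> T" "P u a \<and> P u c"
                have "P u m \<or> P m u" using lin[of a u m] u T m by blast
                moreover have False if "P m u" "m \<noteq> u"
                proof -
                  have mu: "m \<in> T" "u \<in> T" "P m u" "m \<noteq> u" using that m(1) u(1) by auto
                  obtain x where x: "isucc T P m x" "P x u" using child_ex[OF mu] by blast
                  have xT: "x \<in> T" using x(1) isucc_T by blast
                  have pxa: "P x a" using trn[OF xT u(1) T(1) x(2)] u(2) by blast
                  have e1: "ca = x" using child_eq[OF x(1) pxa T(1)] m(10) by simp
                  have pxc: "P x c" using trn[OF xT u(1) T(3) x(2)] u(2) by blast
                  have e2: "dc = x" using child_eq[OF x(1) pxc T(3)] n(11) True by simp
                  have "L cb ca" using Lbc \<open>cb = db\<close> e1 e2 by simp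
                  thus False using Lab L_antisym[OF m(6) m(8)] m(12) by blast
                qed
                ultimately show "P u m" using u rfl by blast
              qed
            qed (use m n True in simp_all)
            thus ?thesis unfolding lex_def using T nac nca mt m(10) n(11) True Lac by simp
          next
            case mnn: False
            have cbT: "cb \<in> T" and dbT: "db \<in> T" using m(8) n(6) isucc_T by blast+
            show ?thesis
            proof (cases "P m n")
              case pmn: True
              have mt: "tmeet T P a c = m"
              proof (rule tmeet_eq)
                show "\<forall>u\<in>T. P u a \<and> P u c \<longrightarrow> P u m"
                proof (intro ballI impI)
                  fix u assume u: "u \<in> T" "P u a \<and> P u c"
                  have "P u n \<or> P n u" using lin[OF T(3) u(1) n(1)] u(2) n(3) by blast
                  moreover have "\<not> P n u"
                  proof
                    assume "P n u"
                    hence "P n a" using trn[OF n(1) u(1) T(1)] u(2) by blast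
                    hence "P n m" using m(4) n(1) n(2) by blast
                    thus False using asym[OF m(1) n(1) pmn] mnn by blast
                  qed
                  ultimately have "P u n" by blast
                  hence "P u b" using trn[OF u(1) n(1) T(2)] n(2) by blast
                  thus "P u m" using m(4) u by blast
                qed
              qed (use m(1,2) trn[OF m(1) n(1) T(3) pmn n(3)] in blast)+
              have "P cb n \<or> P n cb" using lin[OF T(2) cbT n(1)] m(9) n(2) by blast
              moreover have "P n cb \<Longrightarrow> n = cb" using m(8) n(1) pmn mnn unfolding isucc_def by blast
              ultimately have "P cb c" using trn[OF cbT n(1) T(3)] n(3) by blast
              hence "child_toward T P m c = cb" using child_eq[OF m(8) _ T(3)] by blast
              thus ?thesis unfolding lex_def using T nac nca mt m(10) Lab by simp
            next
              case False
              hence pnm: "P n m" using mn by blast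
              have mt: "tmeet T P a c = n"
              proof (rule tmeet_eq)
                show "\<forall>u\<in>T. P u a \<and> P u c \<longrightarrow> P u n"
                proof (intro ballI impI)
                  fix u assume u: "u \<in> T" "P u a \<and> P u c"
                  have "P u m \<or> P m u" using lin[OF T(1) u(1) m(1)] u(2) m(2) by blast
                  moreover have "\<not> P m u"
                  proof
                    assume "P m u"
                    hence "P m c" using trn[OF m(1) u(1) T(3)] u(2) by blast
                    hence "P m n" using n(4) m(1) m(3) by blast
                    thus False using asym[OF m(1) n(1) _ pnm] mnn by blast
                  qed
                  ultimately have "P u m" by blast
                  hence "P u b" using trn[OF u(1) m(1) T(2)] m(3) by blast
                  thus "P u n" using n(4) u by blast
                qed
              qed (use n(1,3) trn[OF n(1) m(1) T(1) pnm m(2)] in blast)+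
              have "P db m \<or> P m db" using lin[OF T(2) dbT m(1)] n(7) m(3) by blast
              moreover have "P m db \<Longrightarrow> m = db" using n(6) m(1) pnm mnn unfolding isucc_def by blast
              ultimately have "P db a" using trn[OF dbT m(1) T(1)] m(2) by blast
              hence "child_toward T P n a = db" using child_eq[OF n(6) _ T(1)] by blast
              thus ?thesis unfolding lex_def using T nac nca mt n(11) Lbc by simp
            qed
          qed
        qed
      qed
    qed
  qed
qed

end

context tr begin

lemma isucc_D: assumes "D \<subseteq> T" "\<forall>w\<in>D. \<forall>u\<in>T. P u w \<longrightarrow> u \<in> D"
  shows "isucc D P m c \<longleftrightarrow> c \<in> D \<and> isucc T P m c"
proof
  assume h: "isucc D P m c"
  have "m \<in> D" "c \<in> D" "P m c" "m \<noteq> c" using h unfolding isucc_def by blast+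
  moreover have "\<forall>u\<in>T. P m u \<and> P u c \<longrightarrow> u = m \<or> u = c"
    using h assms \<open>c \<in> D\<close> unfolding isucc_def by blast
  ultimately show "c \<in> D \<and> isucc T P m c" using assms(1) unfolding isucc_def by blast
next
  assume h: "c \<in> D \<and> isucc T P m c"
  hence "m \<in> D" using assms unfolding isucc_def by blast
  thus "isucc D P m c" using h assms(1) unfolding isucc_def by blast
qed

lemma tmeet_D: assumes "D \<subseteq> T" "\<forall>w\<in>D. \<forall>u\<in>T. P u w \<longrightarrow> u \<in> D" "a \<in> D" "b \<in> D"
  shows "tmeet D P a b = tmeet T P a b"
proof -
  have "\<And>u. (u \<in> D \<and> P u a \<and> P u b \<and> (\<forall>u'\<in>D. P u' a \<and> P u' b \<longrightarrow> P u' u))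
       = (u \<in> T \<and> P u a \<and> P u b \<and> (\<forall>u'\<in>T. P u' a \<and> P u' b \<longrightarrow> P u' u))"
    using assms by blast
  thus ?thesis unfolding tmeet_def by simp
qed

lemma child_D: assumes "D \<subseteq> T" "\<forall>w\<in>D. \<forall>u\<in>T. P u w \<longrightarrow> u \<in> D" "a \<in> D"
  shows "child_toward D P m a = child_toward T P m a"
proof -
  have "\<And>c. (isucc D P m c \<and> P c a) = (isucc T P m c \<and> P c a)"
    using isucc_D[OF assms(1,2)] assms isucc_T by blast
  thus ?thesis unfolding child_toward_def by simp
qed

lemma troot_is: assumes "r \<in> T" "\<forall>x\<in>T. P r x" shows "troot T P = r"
  unfolding troot_def by (rule the_equality) (use assms asym in blast)+

lemma troot_D: assumes "D \<subseteq> T" "r \<in> D" "\<forall>x\<in>T. P r x" shows "troot D P = r"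
  unfolding troot_def by (rule the_equality) (use assms asym in blast)+

end

context otr begin

lemma lex_D: assumes "D \<subseteq> T" "\<forall>w\<in>D. \<forall>u\<in>T. P u w \<longrightarrow> u \<in> D" "a \<in> D" "b \<in> D"
  shows "lex D P L a b = lex T P L a b"
  unfolding lex_def using tmeet_D[OF assms] child_D[OF assms(1,2,3)] child_D[OF assms(1,2,4)] assms
  by auto

lemma lex_refl: "a \<in> T \<Longrightarrow> lx a a" using lex_P rfl by blast

end


theorem lemma4p2:
  fixes T :: "'a set" and PT LT :: "'a \<Rightarrow> 'a \<Rightarrow> bool"
    and S :: "'b set" and PS LS :: "'b \<Rightarrow> 'b \<Rightarrow> bool"
    and f :: "'a \<Rightarrow> 'b" and i :: "'b \<Rightarrow> 'a" and v :: 'b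
  assumes "ordered_tree S PS LS" and "ordered_tree T PT LT"
    and "is_injection T PT LT S PS LS f i"
    and "v \<in> S"
  shows "(restrict f (lexdown T PT LT (i v))) ` lexdown T PT LT (i v) = lexdown S PS LS v
       \<and> sealed_rigid_surj (lexdown T PT LT (i v)) PT LT (lexdown S PS LS v) PS LS
           (restrict f (lexdown T PT LT (i v)))"
proof -
  interpret S: otr S PS LS
    using assms(1) unfolding otr_def tr_def otr_axioms_def ordered_tree_def by blast
  interpret T: otr T PT LT
    using assms(2) unfolding otr_def tr_def otr_axioms_def ordered_tree_def by blast
  have fS: "\<forall>w\<in>T. f w \<in> S" and iT: "\<forall>x\<in>S. i x \<in> T"
    and imeet: "\<forall>x\<in>S. \<forall>y\<in>S. i (tmeet S PS x y) = tmeet T PT (i x) (i y)"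
    and ilex: "\<forall>x\<in>S. \<forall>y\<in>S. lex S PS LS x y \<longrightarrow> lex T PT LT (i x) (i y)"
    and iroot: "i (troot S PS) = troot T PT"
    and fi: "\<forall>s\<in>S. f (i s) = s" and ifw: "\<forall>w\<in>T. PT (i (f w)) w"
    using assms(3) unfolding is_injection_def morphism_def by blast+
  define T' where "T' = lexdown T PT LT (i v)"
  define S' where "S' = lexdown S PS LS v"
  have iv: "i v \<in> T" using iT assms(4) by blast
  have T'sub: "T' \<subseteq> T" and S'sub: "S' \<subseteq> S" unfolding T'_def S'_def lexdown_def by auto
  have memT': "\<And>w. w \<in> T' \<longleftrightarrow> w \<in> T \<and> lex T PT LT w (i v)" unfolding T'_def lexdown_def by auto
  have memS': "\<And>w. w \<in> S' \<longleftrightarrow> w \<in> S \<and> lex S PS LS w v" unfolding S'_def lexdown_def by auto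
  have T'dc: "\<forall>w\<in>T'. \<forall>u\<in>T. PT u w \<longrightarrow> u \<in> T'"
  proof (intro ballI impI)
    fix w u assume "w \<in> T'" "u \<in> T" "PT u w"
    thus "u \<in> T'" using memT' T.lex_P[of u w] T.lex_trans[of u w "i v"] by blast
  qed
  have S'dc: "\<forall>w\<in>S'. \<forall>u\<in>S. PS u w \<longrightarrow> u \<in> S'"
  proof (intro ballI impI)
    fix w u assume "w \<in> S'" "u \<in> S" "PS u w"
    thus "u \<in> S'" using memS' S.lex_P[of u w] S.lex_trans[of u w v] by blast
  qed
  have fmap: "\<forall>w\<in>T'. f w \<in> S'"
  proof
    fix w assume w: "w \<in> T'"
    hence wT: "w \<in> T" and wl: "lex T PT LT w (i v)" using memT' by auto
    have fwS: "f w \<in> S" using fS wT by blast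
    have "lex S PS LS (f w) v"
    proof (cases "lex S PS LS (f w) v")
      case False
      hence "lex S PS LS v (f w)" using S.lex_total[OF fwS assms(4)] by blast
      hence a: "lex T PT LT (i v) (i (f w))" using ilex fwS assms(4) by blast
      have "lex T PT LT (i (f w)) w" using T.lex_P[of "i (f w)" w] iT fwS wT ifw by blast
      hence "lex T PT LT (i v) w" using T.lex_trans a by blast
      hence "w = i v" using T.lex_antisym wl by blast
      hence "f w = v" using fi assms(4) by simp
      thus ?thesis using S.lex_refl assms(4) by simp
    qed
    thus "f w \<in> S'" using memS' fwS by blast
  qed
  have imap: "\<forall>s\<in>S'. i s \<in> T'"
  proof
    fix s assume "s \<in> S'"
    hence "s \<in> S" "lex S PS LS s v" using memS' by auto
    thus "i s \<in> T'" using memT' ilex iT assms(4) by blast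
  qed
  have img: "(restrict f T') ` T' = S'"
  proof
    show "restrict f T' ` T' \<subseteq> S'" using fmap by auto
    show "S' \<subseteq> restrict f T' ` T'"
    proof
      fix s assume s: "s \<in> S'"
      hence "i s \<in> T'" "f (i s) = s" using imap fi S'sub by auto
      thus "s \<in> restrict f T' ` T'" by (metis image_eqI restrict_apply')
    qed
  qed
  have vS': "v \<in> S'" using memS'[of v] assms(4) S.lex_refl[OF assms(4)] by simp
  have ivT': "i v \<in> T'" using memT'[of "i v"] iv T.lex_refl[OF iv] by simp
  obtain rS where rS: "rS \<in> S" "\<forall>x\<in>S. PS rS x" using S.root_ex by blast
  obtain rT where rT: "rT \<in> T" "\<forall>x\<in>T. PT rT x" using T.root_ex by blast
  have rS': "rS \<in> S'" using S'dc vS' rS(1) rS(2) assms(4) by blast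
  have rT': "rT \<in> T'" using T'dc ivT' rT(1) rT(2) iv by blast
  have mor: "morphism S' PS LS T' PT LT i"
    unfolding morphism_def
  proof (intro conjI ballI impI)
    show "\<And>x. x \<in> S' \<Longrightarrow> i x \<in> T'" using imap by simp
    fix x y assume xy: "x \<in> S'" "y \<in> S'"
    have ixy: "i x \<in> T'" "i y \<in> T'" using imap xy by auto
    show "i (tmeet S' PS x y) = tmeet T' PT (i x) (i y)"
      using S.tmeet_D[OF S'sub S'dc xy] T.tmeet_D[OF T'sub T'dc ixy] imeet xy S'sub by auto
  next
    fix x y assume xy: "x \<in> S'" "y \<in> S'" and l: "lex S' PS LS x y"
    have ixy: "i x \<in> T'" "i y \<in> T'" using imap xy by auto
    show "lex T' PT LT (i x) (i y)"
      using S.lex_D[OF S'sub S'dc xy] T.lex_D[OF T'sub T'dc ixy] ilex xy S'sub l by auto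
  next
    have "troot S' PS = rS" using S.troot_D[OF S'sub rS' rS(2)] .
    moreover have "troot T' PT = rT" using T.troot_D[OF T'sub rT' rT(2)] .
    moreover have "troot S PS = rS" using S.troot_is rS by blast
    moreover have "troot T PT = rT" using T.troot_is rT by blast
    ultimately show "i (troot S' PS) = troot T' PT" using iroot by simp
  qed
  have inj: "is_injection T' PT LT S' PS LS (restrict f T') i"
    unfolding is_injection_def
  proof (intro conjI ballI)
    fix w assume "w \<in> T'" thus "restrict f T' w \<in> S'" using fmap by simp
  next
    show "morphism S' PS LS T' PT LT i" by (rule mor)
  next
    fix s assume "s \<in> S'" thus "restrict f T' (i s) = s" using imap fi S'sub by auto
  next
    fix w assume "w \<in> T'" thus "PT (i (restrict f T' w)) w" using ifw T'sub by auto
  qed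
  have lS: "lS = v" if "largest_leaf S' PS LS lS" for lS
  proof -
    have lS': "lS \<in> S'" using that unfolding largest_leaf_def leaf_def by blast
    have "leaf S' PS v"
      unfolding leaf_def
    proof (intro conjI ballI impI)
      show "v \<in> S'" by (rule vS')
      fix y assume "y \<in> S'" "PS v y"
      hence "lex S PS LS v y" "lex S PS LS y v" using S.lex_P memS' assms(4) by auto
      thus "y = v" using S.lex_antisym by blast
    qed
    hence "lex S' PS LS v lS" using that unfolding largest_leaf_def by blast
    hence "lex S PS LS v lS" using S.lex_D[OF S'sub S'dc vS' lS'] by simp
    moreover have "lex S PS LS lS v" using lS' memS' by blast
    ultimately show ?thesis using S.lex_antisym by blast
  qed
  have lT: "lT = i v" if "largest_leaf T' PT LT lT" for lT
  proof -
    have lT': "lT \<in> T'" using that unfolding largest_leaf_def leaf_def by blast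
    have "leaf T' PT (i v)"
      unfolding leaf_def
    proof (intro conjI ballI impI)
      show "i v \<in> T'" by (rule ivT')
      fix y assume "y \<in> T'" "PT (i v) y"
      hence "lex T PT LT (i v) y" "lex T PT LT y (i v)" using T.lex_P memT' iv by auto
      thus "y = i v" using T.lex_antisym by blast
    qed
    hence "lex T' PT LT (i v) lT" using that unfolding largest_leaf_def by blast
    hence "lex T PT LT (i v) lT" using T.lex_D[OF T'sub T'dc ivT' lT'] by simp
    moreover have "lex T PT LT lT (i v)" using lT' memT' by blast
    ultimately show ?thesis using T.lex_antisym by blast
  qed
  have "sealed_rigid_surj T' PT LT S' PS LS (restrict f T')"
    unfolding sealed_rigid_surj_def using inj lS lT by blast
  thus ?thesis using img unfolding T'_def S'_def by blast
qed

end
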